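(* Let $\varphi(x)=\frac{1}{\sqrt2}e^{-x^2/2}$ and define $\sigma:\mathbb R\to\mathbb R$ by $\sigma(x)=\sum_{j=1}^\infty\varphi(x-j)$. Then $\sigma$ is $1$-Lipschitz, nonnegative, bounded above by $2.5$, and $\lim_{x\to-\infty}\sigma(x)=0$. *)

theory Defs
  imports "HOL-Analysis.Analysis"
begin

definition phi :: "real \<Rightarrow> real" where
  "phi x = (1 / sqrt 2) * exp (- (x^2) / 2)"

definition sigma :: "real \<Rightarrow> real" where
  "sigma x = (\<Sum>n. phi (x - real (Suc n)))"

end

theory Submission
  imports Defs "HOL-Real_Asymp.Real_Asymp"
begin



lemma exp_lb:
  fixes x :: real
  assumes "0 \<le> x"
  shows "(\<Sum>k<n. x^k / fact k) \<le> exp x"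
proof -
  have "(\<lambda>k. x^k /\<^sub>R fact k) sums exp x" by (rule exp_converges)
  then have s: "summable (\<lambda>k. x^k / fact k)" and e: "exp x = (\<Sum>k. x^k / fact k)"
    by (auto simp: sums_iff divide_inverse_commute scaleR_conv_of_real)
  show ?thesis unfolding e using s assms by (intro sum_le_suminf) auto
qed

lemma n1: "1.64854 \<le> exp (1/2::real)"
  using exp_lb[of "1/2::real" 6] by (simp add: numeral_eq_Suc)
lemma n2: "7.385 \<le> exp (2::real)"
  using exp_lb[of "2::real" 10] by (simp add: numeral_eq_Suc)
lemma n3: "2.5455 \<le> exp (49/50::real)"
  using exp_lb[of "49/50::real" 5] by (simp add: numeral_eq_Suc)
lemma n4: "16 \<le> exp (72/25::real)"
  using exp_lb[of "72/25::real" 8] by (simp add: numeral_eq_Suc)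
lemma n5: "10 \<le> exp (5/2::real)"
  using exp_lb[of "5/2::real" 8] by (simp add: numeral_eq_Suc)



definition E :: "real \<Rightarrow> real" where "E y = exp (-(y^2)/2)"
definition ge :: "real \<Rightarrow> real" where "ge y = y * E y"

lemma E_pos: "0 < E y" by (simp add: E_def)
lemma E_le1: "E y \<le> 1" by (simp add: E_def)
lemma E_Suc: "E (y + 1) = E y * exp (- y - 1/2)"
proof -
  have "-((y+1)^2)/2 = -(y^2)/2 + (-y-1/2)" by (simp add: power2_eq_square field_simps)
  then show ?thesis unfolding E_def by (metis exp_add)
qed
lemma E_mono: "0 \<le> a \<Longrightarrow> a \<le> b \<Longrightarrow> E b \<le> E a"
  unfolding E_def by (simp add: power_mono)
lemma E_minus: "E (-y) = E y" by (simp add: E_def)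




lemma ge_max: "0 \<le> y \<Longrightarrow> ge y \<le> exp (-(1/2))"
proof -
  assume y: "0 \<le> y"
  have h: "(y-1)*(y-1) \<ge> 0" by simp
  have h2: "y*y - 2*y + 1 \<ge> 0" using h by (simp add: algebra_simps)
  have "y \<le> 1 + (y^2 - 1)/2" using h2 by (simp add: field_simps power2_eq_square)
  also have "\<dots> \<le> exp ((y^2-1)/2)" by (rule exp_ge_add_one_self)
  finally have "y * E y \<le> exp ((y^2-1)/2) * E y" using E_pos by (simp add: mult_right_mono less_imp_le)
  also have "\<dots> = exp (-(1/2))"
  proof -
    have "(y^2-1)/2 + (-(y^2)/2) = -(1/2)" by (simp add: field_simps)
    then show ?thesis unfolding E_def by (metis exp_add)
  qed
  finally show ?thesis by (simp add: ge_def)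
qed

lemma ge_mono: "1 \<le> a \<Longrightarrow> a \<le> b \<Longrightarrow> ge b \<le> ge a"
proof -
  assume a: "1 \<le> a" and ab: "a \<le> b"
  have "(b - a)/a \<le> b - a" using a ab by (simp add: divide_le_eq) (metis mult_left_mono mult.right_neutral diff_ge_0_iff_ge)
  also have "b - a \<le> (b^2-a^2)/2"
  proof -
    have "(b-a)*2 \<le> (b-a)*(b+a)" using a ab by (intro mult_left_mono) auto
    then show ?thesis by (simp add: power2_eq_square algebra_simps)
  qed
  finally have "b / a \<le> 1 + (b^2 - a^2)/2" using a by (simp add: diff_divide_distrib)
  also have "\<dots> \<le> exp ((b^2-a^2)/2)" by (rule exp_ge_add_one_self)
  finally have "b \<le> a * exp ((b^2-a^2)/2)" using a by (simp add: divide_le_eq mult.commute)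
  then have "b * E b \<le> a * exp ((b^2-a^2)/2) * E b" using E_pos by (simp add: mult_right_mono less_imp_le)
  also have "\<dots> = a * E a"
  proof -
    have "(b^2-a^2)/2 + (-(b^2)/2) = -(a^2)/2" by (simp add: field_simps)
    then have "exp ((b^2-a^2)/2) * E b = E a" unfolding E_def by (metis exp_add)
    then show ?thesis by (simp add: mult.assoc)
  qed
  finally show ?thesis by (simp add: ge_def)
qed


lemma geo_bound:
  fixes f :: "nat \<Rightarrow> real"
  assumes f0: "\<And>k. 0 \<le> f k" and fs: "\<And>k. f (Suc k) \<le> r * f k" and r: "0 \<le> r" "r < 1"
  shows "summable f \<and> suminf f \<le> f 0 / (1 - r)"
proof -
  have b: "f k \<le> f 0 * r^k" for k
  proof (induction k)
    case 0
    then show ?case by simp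
  next
    case (Suc k)
    have "f (Suc k) \<le> r * f k" by (rule fs)
    also have "\<dots> \<le> r * (f 0 * r^k)" using Suc r(1) by (rule mult_left_mono)
    also have "\<dots> = f 0 * r^Suc k" by (metis mult.left_commute power_Suc)
    finally show ?case .
  qed
  have gs: "(\<lambda>k. f 0 * r^k) sums (f 0 * (1 / (1-r)))"
    using r by (intro sums_mult geometric_sums) simp
  have sg: "summable (\<lambda>k. f 0 * r^k)" using gs by (rule sums_summable)
  have sf: "summable f"
  proof (rule summable_comparison_test'[OF sg])
    fix n :: nat assume "0 \<le> n"
    show "norm (f n) \<le> f 0 * r^n" using b[of n] f0[of n] by simp
  qed
  have "suminf f \<le> (\<Sum>k. f 0 * r^k)" by (rule suminf_le[OF b sf sg])
  also have "\<dots> = f 0 / (1 - r)" using gs by (simp add: sums_iff)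
  finally show ?thesis using sf by simp
qed


lemma ge_tail:
  assumes y: "2 \<le> y"
  shows "summable (\<lambda>k. ge (y + real k)) \<and> (\<Sum>k. ge (y + real k)) \<le> 4/3 * ge y"
proof -
  have step: "ge (z + 1) \<le> 1/4 * ge z" if z: "2 \<le> z" for z
  proof -
    have "exp (2::real) \<le> exp (z + 1/2)" using z by simp
    then have ex: "7.385 \<le> exp (z + 1/2)" using n2 by linarith
    have "4 * (z+1) \<le> z * exp (z + 1/2)"
    proof -
      have "4 * (z+1) \<le> z * 7.385" using z by simp
      also have "\<dots> \<le> z * exp (z + 1/2)" using z ex by (intro mult_left_mono) auto
      finally show ?thesis .
    qed
    have X: "exp (-z - 1/2) = 1 / exp (z + 1/2)"
    proof -
      have m: "-z - 1/2 = -(z + 1/2)" by simp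
      show ?thesis unfolding m exp_minus by (rule inverse_eq_divide)
    qed
    have "4 * (z+1) / exp (z + 1/2) \<le> z" using \<open>4 * (z+1) \<le> z * exp (z + 1/2)\<close>
      by (simp add: pos_divide_le_eq)
    then have "4 * ((z+1) * exp (-z - 1/2)) \<le> z" unfolding X by simp
    then have "4 * ((z+1) * exp (-z - 1/2)) * E z \<le> z * E z" using E_pos
      by (intro mult_right_mono) (auto simp: less_imp_le)
    moreover have "ge (z+1) = (z+1) * exp (-z - 1/2) * E z" by (simp add: ge_def E_Suc mult_ac)
    moreover have "ge z = z * E z" by (simp add: ge_def)
    ultimately show ?thesis by linarith
  qed
  have "summable (\<lambda>k. ge (y + real k)) \<and> (\<Sum>k. ge (y + real k)) \<le> ge (y + real 0) / (1 - 1/4)"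
  proof (rule geo_bound)
    show "0 \<le> ge (y + real k)" for k using y E_pos by (simp add: ge_def less_imp_le)
    show "ge (y + real (Suc k)) \<le> 1/4 * ge (y + real k)" for k
    proof -
      have e: "y + real (Suc k) = (y + real k) + 1" by simp
      have "2 \<le> y + real k" using y by simp
      from step[OF this] show ?thesis unfolding e .
    qed
  qed auto
  then show ?thesis by simp
qed



lemma exp_neg_le: "0 < (c::real) \<Longrightarrow> c \<le> exp a \<Longrightarrow> exp (-a) \<le> 1/c"
  unfolding exp_minus inverse_eq_divide by (intro divide_left_mono) auto

lemma m1: "exp (-(1/2)) \<le> (0.6066::real)"
proof - have "exp (-(1/2)) \<le> 1/(1.64854::real)" by (rule exp_neg_le[OF _ n1]) simp
  also have "\<dots> \<le> 0.6066" by simp finally show ?thesis . qed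
lemma m2: "exp (-2) \<le> (0.13541::real)"
proof - have "exp (-2) \<le> 1/(7.385::real)" by (rule exp_neg_le[OF _ n2]) simp
  also have "\<dots> \<le> 0.13541" by simp finally show ?thesis . qed
lemma m3: "exp (-(49/50)) \<le> (0.39286::real)"
proof - have "exp (-(49/50)) \<le> 1/(2.5455::real)" by (rule exp_neg_le[OF _ n3]) simp
  also have "\<dots> \<le> 0.39286" by simp finally show ?thesis . qed
lemma m4: "exp (-(72/25)) \<le> (1/16::real)"
  by (rule exp_neg_le[OF _ n4]) simp
lemma m5: "exp (-(5/2)) \<le> (1/10::real)"
  by (rule exp_neg_le[OF _ n5]) simp

lemma E1: "E 1 = exp (-(1/2))" by (simp add: E_def)
lemma E2: "E 2 = exp (-2)" by (simp add: E_def)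
lemma E75: "E (7/5) = exp (-(49/50))" by (simp add: E_def power_divide)
lemma E125: "E (12/5) = exp (-(72/25))" by (simp add: E_def power_divide)
lemma E0: "E 0 = 1" by (simp add: E_def)



lemma ge_nonneg: "0 \<le> y \<Longrightarrow> 0 \<le> ge y"
  using E_pos[of y] by (simp add: ge_def)

lemma ge_le_self: "0 \<le> y \<Longrightarrow> ge y \<le> y"
  using E_le1[of y] by (simp add: ge_def mult_left_le)

lemma shift2: "(\<lambda>n. f (s + real (n + 2))) = (\<lambda>k. f ((s + 2) + real k))"
  by (rule ext) (simp add: add_ac)

lemma Gsum:
  assumes s: "0 \<le> s"
  shows "summable (\<lambda>k. ge (s + real k)) \<and> (\<Sum>k. ge (s + real k)) \<le> 1.41"
proof -
  have t: "summable (\<lambda>k. ge ((s+2) + real k)) \<and> (\<Sum>k. ge ((s+2) + real k)) \<le> 4/3 * ge (s+2)"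
    using s by (intro ge_tail) simp
  have sm: "summable (\<lambda>k. ge (s + real k))"
    using t summable_iff_shift[of "\<lambda>k. ge (s + real k)" 2] unfolding shift2 by simp
  have eq: "(\<Sum>k. ge (s + real k)) = (\<Sum>k. ge ((s+2) + real k)) + (ge s + ge (s + 1))"
    using suminf_split_initial_segment[OF sm, of 2] unfolding shift2
    by (simp add: numeral_2_eq_2)
  have g1: "ge s \<le> 0.6066" using ge_max[OF s] m1 by linarith
  show ?thesis
  proof (cases "s \<le> 2/5")
    case True
    have a: "ge s \<le> 2/5" using ge_le_self[OF s] True by linarith
    have b: "ge (s+1) \<le> 0.6066" using ge_max[of "s+1"] s m1 by simp
    have c: "ge (s+2) \<le> ge 2" using s by (intro ge_mono) auto
    have "ge 2 \<le> 2 * 0.13541" using m2 by (simp add: ge_def E2)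
    then show ?thesis using sm eq a b c t by simp
  next
    case False
    have b: "ge (s+1) \<le> ge (7/5)" using False by (intro ge_mono) auto
    have b2: "ge (7/5) \<le> 7/5 * 0.39286" using m3 by (simp add: ge_def E75)
    have c: "ge (s+2) \<le> ge (12/5)" using False by (intro ge_mono) auto
    have c2: "ge (12/5) \<le> 12/5 * (1/16)" using m4 by (simp add: ge_def E125)
    show ?thesis using sm eq g1 b b2 c c2 t by simp
  qed
qed

lemma E_step: "2 \<le> y \<Longrightarrow> E (y + 1) \<le> 1/10 * E y"
proof -
  assume y: "2 \<le> y"
  have "exp (- y - 1/2) \<le> exp (-(5/2))" using y by simp
  then have "exp (- y - 1/2) \<le> 1/10" using m5 by linarith
  then have "E y * exp (- y - 1/2) \<le> E y * (1/10)" using E_pos[of y]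
    by (intro mult_left_mono) auto
  then show ?thesis by (simp add: E_Suc mult.commute)
qed

lemma Esum0: "summable (\<lambda>k. E (real k)) \<and> (\<Sum>k. E (real k)) \<le> 1.7575"
proof -
  have t: "summable (\<lambda>k. E (2 + real k)) \<and> (\<Sum>k. E (2 + real k)) \<le> E (2 + real 0) / (1 - 1/10)"
  proof (rule geo_bound)
    show "0 \<le> E (2 + real k)" for k using E_pos less_imp_le by blast
    show "E (2 + real (Suc k)) \<le> 1/10 * E (2 + real k)" for k
    proof -
      have e: "2 + real (Suc k) = (2 + real k) + 1" by simp
      have "2 \<le> 2 + real k" by simp
      from E_step[OF this] show ?thesis unfolding e .
    qed
  qed auto
  have sh: "(\<lambda>n. E (real (n + 2))) = (\<lambda>k. E (2 + real k))" by (rule ext) (simp add: add_ac)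
  have sm: "summable (\<lambda>k. E (real k))"
    using t summable_iff_shift[of "\<lambda>k. E (real k)" 2] unfolding sh by simp
  have eq: "(\<Sum>k. E (real k)) = (\<Sum>k. E (2 + real k)) + (E 0 + E 1)"
    using suminf_split_initial_segment[OF sm, of 2] unfolding sh
    by (simp add: numeral_2_eq_2)
  show ?thesis using sm eq t E0 E1 m1 m2 E2 by simp
qed

lemma Esum:
  assumes s: "0 \<le> s"
  shows "summable (\<lambda>k. E (s + real k)) \<and> (\<Sum>k. E (s + real k)) \<le> 1.7575"
proof -
  have le: "E (s + real k) \<le> E (real k)" for k using s by (intro E_mono) auto
  have sm: "summable (\<lambda>k. E (s + real k))"
  proof (rule summable_comparison_test'[OF conjunct1[OF Esum0]])
    fix n :: nat
    show "norm (E (s + real n)) \<le> E (real n)" using le[of n] E_pos[of "s + real n"] by simp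
  qed
  have "(\<Sum>k. E (s + real k)) \<le> (\<Sum>k. E (real k))" using le sm Esum0 by (intro suminf_le) auto
  then show ?thesis using sm Esum0 by simp
qed

lemma E_add_le: "0 \<le> t \<Longrightarrow> 0 \<le> k \<Longrightarrow> E (t + k) \<le> E t * E k"
proof -
  assume t: "0 \<le> t" and k: "0 \<le> k"
  have sq: "(t+k)^2 = t^2 + k^2 + 2*(t*k)" by (simp add: power2_eq_square algebra_simps)
  have "-((t+k)^2)/2 \<le> -(t^2)/2 + -(k^2)/2" unfolding sq using mult_nonneg_nonneg[OF t k] by simp
  then have "exp (-((t+k)^2)/2) \<le> exp (-(t^2)/2 + -(k^2)/2)" by simp
  moreover have "exp (-(t^2)/2 + -(k^2)/2) = E t * E k" unfolding E_def by (rule exp_add)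
  ultimately show ?thesis unfolding E_def by linarith
qed



lemma split_series:
  fixes F :: "real \<Rightarrow> real" and x :: real
  assumes summ: "\<And>t. 0 < t \<Longrightarrow> summable (\<lambda>k. F (-(t + real k)))"
  obtains m s t where "0 \<le> s" "0 < t" "summable (\<lambda>n. F (x - real (Suc n)))"
     "(\<Sum>n. F (x - real (Suc n))) = (\<Sum>k<m. F (s + real k)) + (\<Sum>k. F (-(t + real k)))"
proof -
  define m where "m = nat \<lfloor>x\<rfloor>"
  define t where "t = real m + 1 - x"
  define s where "s = (if m = 0 then 0 else x - real m)"
  have fm: "real_of_int \<lfloor>x\<rfloor> \<le> real m" unfolding m_def by linarith
  have "x < real_of_int \<lfloor>x\<rfloor> + 1" by linarith
  then have t0: "0 < t" using fm unfolding t_def by linarith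
  have s0: "0 \<le> s"
  proof (cases "m = 0")
    case False
    then have "real m = real_of_int \<lfloor>x\<rfloor>" unfolding m_def by simp
    moreover have "real_of_int \<lfloor>x\<rfloor> \<le> x" by (rule of_int_floor_le)
    ultimately show ?thesis using False unfolding s_def by simp
  qed (simp add: s_def)
  define T where "T n = F (x - real (Suc n))" for n
  have shiftT: "(\<lambda>n. T (n + m)) = (\<lambda>k. F (-(t + real k)))"
    by (rule ext) (simp add: T_def t_def algebra_simps)
  have sT: "summable T" using summ[OF t0] summable_iff_shift[of T m] unfolding shiftT by simp
  have fin: "(\<Sum>i<m. T i) = (\<Sum>k<m. F (s + real k))"
  proof -
    have "(\<Sum>i<m. T i) = (\<Sum>i<m. T (m - Suc i))" by (rule sum.nat_diff_reindex[symmetric])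
    also have "\<dots> = (\<Sum>k<m. F (s + real k))"
    proof (rule sum.cong[OF refl])
      fix i assume "i \<in> {..<m}"
      then have im: "i < m" by simp
      then have m0: "m \<noteq> 0" by simp
      have "real (Suc (m - Suc i)) = real m - real i" using im by (simp add: of_nat_diff)
      then have "x - real (Suc (m - Suc i)) = s + real i" using m0 by (simp add: s_def)
      then show "T (m - Suc i) = F (s + real i)" by (simp add: T_def)
    qed
    finally show ?thesis .
  qed
  have "(\<Sum>n. T n) = (\<Sum>k. F (-(t + real k))) + (\<Sum>i<m. T i)"
    using suminf_split_initial_segment[OF sT, of m] unfolding shiftT by simp
  then have eq: "(\<Sum>n. F (x - real (Suc n))) = (\<Sum>k<m. F (s + real k)) + (\<Sum>k. F (-(t + real k)))"
    unfolding fin by (simp add: T_def)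
  have sT': "summable (\<lambda>n. F (x - real (Suc n)))" using sT unfolding T_def .
  show ?thesis by (rule that[OF s0 t0 sT' eq])
qed

lemma sqrt2: "1.41 \<le> sqrt (2::real)" by (rule real_le_rsqrt) (simp add: power2_eq_square)

lemma phi_E: "phi y = E y / sqrt 2" by (simp add: phi_def E_def)

definition hh :: "real \<Rightarrow> real" where "hh y = -(y * phi y)"

lemma hh_neg: "hh (-(y)) = ge y / sqrt 2"
  by (simp add: hh_def ge_def phi_E E_minus)
lemma hh_pos: "hh y = -(ge y / sqrt 2)"
  by (simp add: hh_def ge_def phi_E)

lemma phi_minus: "phi (-(y)) = phi y" by (simp add: phi_def)

lemma phi_summ: "0 < t \<Longrightarrow> summable (\<lambda>k. phi (-(t + real k)))"
  unfolding phi_minus using Esum[of t] by (simp add: phi_E summable_divide)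
lemma hh_summ: "0 < t \<Longrightarrow> summable (\<lambda>k. hh (-(t + real k)))"
  using Gsum[of t] unfolding hh_neg by (simp add: summable_divide)

lemma sigma_bounds: "0 \<le> sigma x \<and> sigma x \<le> 2.5"
proof -
  obtain m s t where s: "0 \<le> s" and t: "0 < t"
    and eq: "(\<Sum>n. phi (x - real (Suc n))) = (\<Sum>k<m. phi (s + real k)) + (\<Sum>k. phi (-(t + real k)))"
    using split_series[of phi x, OF phi_summ] by blast
  have sq: "0 < sqrt (2::real)" by simp
  have A: "(\<Sum>k<m. phi (s + real k)) \<le> 1.7575 / sqrt 2"
  proof -
    have es: "summable (\<lambda>k. E (s + real k))" using Esum[OF s] by simp
    have "(\<Sum>k<m. phi (s + real k)) = (\<Sum>k<m. E (s + real k)) / sqrt 2"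
      by (simp add: phi_E sum_divide_distrib)
    also have "(\<Sum>k<m. E (s + real k)) \<le> (\<Sum>k. E (s + real k))"
      using es E_pos by (intro sum_le_suminf) (auto simp: less_imp_le)
    then have "(\<Sum>k<m. E (s + real k)) / sqrt 2 \<le> 1.7575 / sqrt 2"
      using Esum[OF s] sq by (intro divide_right_mono) auto
    finally show ?thesis .
  qed
  have A0: "0 \<le> (\<Sum>k<m. phi (s + real k))" using E_pos by (intro sum_nonneg) (simp add: phi_E less_imp_le)
  have B: "(\<Sum>k. phi (-(t + real k))) = (\<Sum>k. E (t + real k)) / sqrt 2"
    unfolding phi_minus using Esum[of t] t by (simp add: phi_E suminf_divide)
  have B1: "(\<Sum>k. E (t + real k)) \<le> 1.7575" using Esum[of t] t by simp
  have B0: "0 \<le> (\<Sum>k. E (t + real k))" using Esum[of t] t E_pos by (intro suminf_nonneg) (auto simp: less_imp_le)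
  have "2 * 1.7575 / sqrt 2 \<le> (2.5::real)" using sqrt2 by (simp add: divide_le_eq)
  then have "1.7575 / sqrt 2 + 1.7575 / sqrt 2 \<le> (2.5::real)" by simp
  moreover have "(\<Sum>k. E (t + real k)) / sqrt 2 \<le> 1.7575 / sqrt 2" using B1 sq by (intro divide_right_mono) auto
  moreover have "0 \<le> (\<Sum>k. E (t + real k)) / sqrt 2" using B0 by simp
  ultimately show ?thesis using A A0 eq B unfolding sigma_def by linarith
qed



lemma phi_deriv: "(phi has_real_derivative hh y) (at y)"
  unfolding phi_def[abs_def] hh_def
  apply (auto intro!: derivative_eq_intros simp: phi_def power2_eq_square)
  apply (simp add: field_simps)
  done

lemma term_deriv: "((\<lambda>y. phi (y - c)) has_real_derivative hh (y - c)) (at y within S)"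
proof -
  have d: "((\<lambda>y. y - c) has_real_derivative 1) (at y)" by (auto intro!: derivative_eq_intros)
  have "((\<lambda>y. phi (y - c)) has_real_derivative hh (y - c) * 1) (at y)"
    by (rule DERIV_chain2[OF phi_deriv d])
  then show ?thesis by (simp add: has_field_derivative_at_within)
qed

lemma div_sqrt2_le: "0 \<le> a \<Longrightarrow> a / sqrt 2 \<le> (a::real)"
  using sqrt2 by (simp add: divide_le_eq mult_le_cancel_left1)

lemma sigma_deriv: "(sigma has_real_derivative (\<Sum>n. hh (x - real (Suc n)))) (at x)"
proof -
  let ?S = "{x-1..x+1}"
  define N where "N = nat \<lceil>x\<rceil> + 1"
  have Nx: "x + 1 \<le> real N" unfolding N_def by linarith
  have unif: "uniformly_convergent_on ?S (\<lambda>n y. \<Sum>i<n. hh (y - real (Suc i)))"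
  proof (rule Weierstrass_m_test'_ev[where M = "\<lambda>n. ge (real n - x)"])
    show "eventually (\<lambda>n. \<forall>y\<in>?S. norm (hh (y - real (Suc n))) \<le> ge (real n - x)) sequentially"
      unfolding eventually_sequentially
    proof (intro exI allI impI ballI)
      fix n y assume n: "N \<le> n" and y: "y \<in> ?S"
      have nx: "1 \<le> real n - x" using n Nx by (smt (verit) of_nat_mono)
      have q: "real n - x \<le> real (Suc n) - y" using y by simp
      have e: "y - real (Suc n) = -(real (Suc n) - y)" by simp
      have g0: "0 \<le> ge (real (Suc n) - y)" using nx q by (intro ge_nonneg) linarith
      have "norm (hh (y - real (Suc n))) = ge (real (Suc n) - y) / sqrt 2"
        unfolding e hh_neg using g0 by simp
      also have "\<dots> \<le> ge (real (Suc n) - y)" by (rule div_sqrt2_le[OF g0])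
      also have "\<dots> \<le> ge (real n - x)" by (rule ge_mono[OF nx q])
      finally show "norm (hh (y - real (Suc n))) \<le> ge (real n - x)" .
    qed
    have "0 \<le> real N - x" using Nx by linarith
    then have "summable (\<lambda>k. ge ((real N - x) + real k))" using Gsum by blast
    moreover have "(\<lambda>n. ge (real (n + N) - x)) = (\<lambda>k. ge ((real N - x) + real k))"
      by (rule ext) (simp add: algebra_simps)
    ultimately show "summable (\<lambda>n. ge (real n - x))"
      using summable_iff_shift[of "\<lambda>n. ge (real n - x)" N] by simp
  qed
  obtain m s t where sx: "summable (\<lambda>n. phi (x - real (Suc n)))"
    using split_series[of phi x, OF phi_summ] by blast
  have D: "((\<lambda>x. \<Sum>n. phi (x - real (Suc n))) has_field_derivative (\<Sum>n. hh (x - real (Suc n)))) (at x)"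
  proof (rule has_field_derivative_series'(2)[where S="?S" and x0=x])
    show "convex ?S" by simp
    show "\<And>n y. y \<in> ?S \<Longrightarrow> ((\<lambda>y. phi (y - real (Suc n))) has_field_derivative hh (y - real (Suc n))) (at y within ?S)"
      by (rule term_deriv)
    show "uniformly_convergent_on ?S (\<lambda>n y. \<Sum>i<n. hh (y - real (Suc i)))" by (rule unif)
    show "x \<in> ?S" by simp
    show "summable (\<lambda>n. phi (x - real (Suc n)))" by (rule sx)
    show "x \<in> interior ?S" by simp
  qed
  have "sigma = (\<lambda>x. \<Sum>n. phi (x - real (Suc n)))" by (rule ext) (simp add: sigma_def)
  then show ?thesis using D by simp
qed

lemma deriv_bound: "\<bar>\<Sum>n. hh (x - real (Suc n))\<bar> \<le> 1"
proof -
  obtain m s t where s: "0 \<le> s" and t: "0 < t"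
    and eq: "(\<Sum>n. hh (x - real (Suc n))) = (\<Sum>k<m. hh (s + real k)) + (\<Sum>k. hh (-(t + real k)))"
    using split_series[of hh x, OF hh_summ] by blast
  define A where "A = (\<Sum>k<m. ge (s + real k))"
  define B where "B = (\<Sum>k. ge (t + real k))"
  have gs: "summable (\<lambda>k. ge (s + real k))" using Gsum[OF s] by simp
  have "A \<le> (\<Sum>k. ge (s + real k))" unfolding A_def
    using gs s by (intro sum_le_suminf) (auto intro: ge_nonneg)
  then have A1: "A \<le> 1.41" using Gsum[OF s] by simp
  have A0: "0 \<le> A" unfolding A_def using s by (intro sum_nonneg ge_nonneg) simp
  have B1: "B \<le> 1.41" unfolding B_def using Gsum[of t] t by simp
  have B0: "0 \<le> B" unfolding B_def using Gsum[of t] t by (intro suminf_nonneg) (auto intro: ge_nonneg)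
  have e1: "(\<Sum>k<m. hh (s + real k)) = - (A / sqrt 2)"
    unfolding A_def hh_pos by (simp add: sum_divide_distrib sum_negf)
  have e2: "(\<Sum>k. hh (-(t + real k))) = B / sqrt 2"
    unfolding B_def hh_neg using Gsum[of t] t by (simp add: suminf_divide)
  have "\<bar>B - A\<bar> \<le> 1.41" using A0 A1 B0 B1 by linarith
  also have "1.41 \<le> sqrt 2" by (rule sqrt2)
  finally have "\<bar>B - A\<bar> / sqrt 2 \<le> 1" by simp
  then show ?thesis unfolding eq e1 e2 by (simp add: diff_divide_distrib[symmetric] abs_divide)
qed

lemma sigma_lip: "a \<le> b \<Longrightarrow> \<bar>sigma b - sigma a\<bar> \<le> b - a"
proof (cases "a = b")
  case False
  assume ab: "a \<le> b"
  then have "a < b" using False by simp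
  then obtain z where "a < z" "z < b" and eq: "sigma b - sigma a = (b - a) * (\<Sum>n. hh (z - real (Suc n)))"
    using MVT2[of a b sigma "\<lambda>x. \<Sum>n. hh (x - real (Suc n))"] sigma_deriv by blast
  have "\<bar>sigma b - sigma a\<bar> = (b - a) * \<bar>\<Sum>n. hh (z - real (Suc n))\<bar>" unfolding eq using ab by (simp add: abs_mult)
  also have "\<dots> \<le> (b - a) * 1" using ab deriv_bound by (intro mult_left_mono) auto
  finally show ?thesis by simp
qed simp

lemma sigma_tendsto: "(sigma \<longlongrightarrow> 0) at_bot"
proof (rule tendsto_sandwich[where f="\<lambda>_. 0" and h="\<lambda>x. 1.7575 * E (1 - x)"])
  show "eventually (\<lambda>x. 0 \<le> sigma x) at_bot" using sigma_bounds by simp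
  show "eventually (\<lambda>x. sigma x \<le> 1.7575 * E (1 - x)) at_bot"
    unfolding eventually_at_bot_linorder
  proof (intro exI allI impI)
    fix x :: real assume x: "x \<le> 0"
    have e: "\<And>k. phi (x - real (Suc k)) = E ((1 - x) + real k) / sqrt 2"
    proof -
      fix k
      have "x - real (Suc k) = -((1 - x) + real k)" by simp
      then show "phi (x - real (Suc k)) = E ((1 - x) + real k) / sqrt 2" by (simp only: phi_minus phi_E E_minus)
    qed
    have s1: "summable (\<lambda>k. E ((1 - x) + real k))" using Esum[of "1 - x"] x by simp
    have s2: "summable (\<lambda>k. E (1 - x) * E (real k))" using Esum0 by (intro summable_mult) simp
    have le1: "E ((1 - x) + real k) / sqrt 2 \<le> E (1 - x) * E (real k)" for k
    proof -
      have "E ((1 - x) + real k) / sqrt 2 \<le> E ((1 - x) + real k)" using E_pos less_imp_le div_sqrt2_le by blast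
      also have "\<dots> \<le> E (1 - x) * E (real k)" using x by (intro E_add_le) auto
      finally show ?thesis .
    qed
    have "sigma x = (\<Sum>k. E ((1 - x) + real k) / sqrt 2)" unfolding sigma_def e ..
    also have "\<dots> \<le> (\<Sum>k. E (1 - x) * E (real k))"
      using le1 s1 s2 by (intro suminf_le) (auto intro: summable_divide)
    also have "\<dots> = E (1 - x) * (\<Sum>k. E (real k))" using Esum0 by (simp add: suminf_mult)
    also have "\<dots> \<le> E (1 - x) * 1.7575" using Esum0 E_pos[of "1 - x"] by (intro mult_left_mono) auto
    finally show "sigma x \<le> 1.7575 * E (1 - x)" by simp
  qed
  show "((\<lambda>x. 0) \<longlongrightarrow> (0::real)) at_bot" by simp
  show "((\<lambda>x. 1.7575 * E (1 - x)) \<longlongrightarrow> (0::real)) at_bot"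
    unfolding E_def by real_asymp
qed

theorem lemma1:
  shows "1-lipschitz_on UNIV sigma \<and> (\<forall>x. 0 \<le> sigma x) \<and> (\<forall>x. sigma x \<le> 2.5)
         \<and> (sigma \<longlongrightarrow> 0) at_bot"
proof (intro conjI allI)
  show "1-lipschitz_on UNIV sigma"
  proof (rule lipschitz_onI)
    fix x y :: real
    show "dist (sigma x) (sigma y) \<le> 1 * dist x y"
    proof (cases "x \<le> y")
      case True
      then show ?thesis using sigma_lip[OF True] by (simp add: dist_real_def abs_minus_commute)
    next
      case False
      then have "y \<le> x" by simp
      then show ?thesis using sigma_lip[of y x] by (simp add: dist_real_def)
    qed
  qed simp
  show "0 \<le> sigma x" for x using sigma_bounds by simp
  show "sigma x \<le> 2.5" for x using sigma_bounds by simp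
  show "(sigma \<longlongrightarrow> 0) at_bot" by (rule sigma_tendsto)
qed

end
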